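(* Let $S=\{1,\ldots,K\}$, $K>1$, let $T\ge 1$, and let $p$ be the distribution of any first order Markov chain on $S^T$ (for a path $s^T=(s_1,\ldots,s_T)\in S^T$ and $1\le m\le n\le T$, $p(s_m^n)$ denotes the marginal probability that the chain takes values $(s_m,\ldots,s_n)$ at times $m,\ldots,n$). For a positive integer $k\le T$ define $$\bar U_k(s^T):=\prod_{j=1-k}^{T-1}p\big(s_{(j+1)\vee 1}^{(j+k)\wedge T}\big),\qquad \bar R_k(s^T):=-\frac{1}{T}\ln \bar U_k(s^T),$$ and $\bar R_\infty(s^T):=-\frac{1}{T}\log p(s^T)$. Let $k$ be such that $T\geq k>1$. Then $$\bar R_k(s^T)=\bar R_{\infty}(s^T)+\bar R_{k-1}(s^T)\quad\text{for all } s^T\in S^T.$$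
   Context: Here $a\vee b=\max\{a,b\}$ and $a\wedge b=\min\{a,b\}$. For $k=1$, $\bar R_1(s^T)=-\frac1T\sum_{t=1}^T\log p(s_t)$ (log-pseudo-likelihood risk). Equivalently, $\bar U_k(s^T)=p(s^T)\,\bar U_{k-1}(s^T)$. *)

theory Defs
  imports "HOL-Analysis.Analysis" "HOL-Library.Extended_Real"
begin

definition paths :: "nat \<Rightarrow> nat \<Rightarrow> (nat \<Rightarrow> nat) set" where
  "paths K T = PiE {1..T} (\<lambda>_. {1..K})"

text \<open>A first order (possibly time-inhomogeneous) Markov chain on S^T, given by an initial
  distribution pi on S and transition matrices P t (from time t to t+1), 1 <= t < T.\<close>
definition is_markov_chain :: "nat \<Rightarrow> nat \<Rightarrow> (nat \<Rightarrow> real) \<Rightarrow> (nat \<Rightarrow> nat \<Rightarrow> nat \<Rightarrow> real) \<Rightarrow> bool" where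
  "is_markov_chain K T \<pi> P \<longleftrightarrow>
     (\<forall>i\<in>{1..K}. \<pi> i \<ge> 0) \<and> (\<Sum>i\<in>{1..K}. \<pi> i) = 1 \<and>
     (\<forall>t\<in>{1..<T}. \<forall>i\<in>{1..K}. (\<forall>j\<in>{1..K}. P t i j \<ge> 0) \<and> (\<Sum>j\<in>{1..K}. P t i j) = 1)"

definition joint :: "nat \<Rightarrow> (nat \<Rightarrow> real) \<Rightarrow> (nat \<Rightarrow> nat \<Rightarrow> nat \<Rightarrow> real) \<Rightarrow> (nat \<Rightarrow> nat) \<Rightarrow> real" where
  "joint T \<pi> P x = \<pi> (x 1) * (\<Prod>t\<in>{1..<T}. P t (x t) (x (t+1)))"

definition marg :: "nat \<Rightarrow> nat \<Rightarrow> (nat \<Rightarrow> real) \<Rightarrow> (nat \<Rightarrow> nat \<Rightarrow> nat \<Rightarrow> real) \<Rightarrow> nat \<Rightarrow> nat \<Rightarrow> (nat \<Rightarrow> nat) \<Rightarrow> real" where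
  "marg K T \<pi> P m n s = (\<Sum>x\<in>{x\<in>paths K T. \<forall>i\<in>{m..n}. x i = s i}. joint T \<pi> P x)"

definition Ubar :: "nat \<Rightarrow> nat \<Rightarrow> (nat \<Rightarrow> real) \<Rightarrow> (nat \<Rightarrow> nat \<Rightarrow> nat \<Rightarrow> real) \<Rightarrow> nat \<Rightarrow> (nat \<Rightarrow> nat) \<Rightarrow> real" where
  "Ubar K T \<pi> P k s = (\<Prod>j\<in>{1 - int k..int T - 1}.
      marg K T \<pi> P (nat (max (j+1) 1)) (nat (min (j + int k) (int T))) s)"

text \<open>Natural log extended to [0,\<infinity>) with ln 0 = -\<infinity> (so risks may be +\<infinity>).\<close>
definition eln :: "real \<Rightarrow> ereal" where
  "eln x = (if x = 0 then -\<infinity> else ereal (ln x))"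

definition Rbar :: "nat \<Rightarrow> nat \<Rightarrow> (nat \<Rightarrow> real) \<Rightarrow> (nat \<Rightarrow> nat \<Rightarrow> nat \<Rightarrow> real) \<Rightarrow> nat \<Rightarrow> (nat \<Rightarrow> nat) \<Rightarrow> ereal" where
  "Rbar K T \<pi> P k s = - (ereal (1 / real T) * eln (Ubar K T \<pi> P k s))"

definition Rbar_inf :: "nat \<Rightarrow> nat \<Rightarrow> (nat \<Rightarrow> real) \<Rightarrow> (nat \<Rightarrow> nat \<Rightarrow> nat \<Rightarrow> real) \<Rightarrow> (nat \<Rightarrow> nat) \<Rightarrow> ereal" where
  "Rbar_inf K T \<pi> P s = - (ereal (1 / real T) * eln (marg K T \<pi> P 1 T s))"

end

theory Submission
  imports Defs
begin

lemma sum_PiE_Suc: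
  assumes "finite A"
  shows "(\<Sum>x\<in>PiE {1..Suc n} (\<lambda>_. A). f x) =
         (\<Sum>y\<in>PiE {1..n} (\<lambda>_. A). \<Sum>i\<in>A. f (y(Suc n := i)))"
proof -
  have e: "{1..Suc n} = insert (Suc n) {1..n}" by auto
  have "(\<Sum>y\<in>PiE {1..n} (\<lambda>_. A). \<Sum>i\<in>A. f (y(Suc n := i)))
      = (\<Sum>(y,i)\<in>PiE {1..n} (\<lambda>_. A) \<times> A. f (y(Suc n := i)))"
    by (rule sum.cartesian_product)
  also have "\<dots> = (\<Sum>x\<in>PiE {1..Suc n} (\<lambda>_. A). f x)"
    unfolding e
    by (rule sum.reindex_bij_witness[of _ "\<lambda>g. (g(Suc n := undefined), g (Suc n))" "\<lambda>(y,i). y(Suc n := i)"])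
       (auto simp: PiE_def extensional_def)
  finally show ?thesis by simp
qed

definition MM :: "nat \<Rightarrow> nat \<Rightarrow> (nat \<Rightarrow> real) \<Rightarrow> (nat \<Rightarrow> nat \<Rightarrow> nat \<Rightarrow> real) \<Rightarrow> ((nat \<Rightarrow> nat) \<Rightarrow> bool) \<Rightarrow> real" where
  "MM K n \<pi> P \<phi> = (\<Sum>x\<in>PiE {1..n} (\<lambda>_. {1..K}). if \<phi> x then joint n \<pi> P x else 0)"

lemma joint_Suc:
  assumes "n \<ge> 1"
  shows "joint (Suc n) \<pi> P (y(Suc n := i)) = joint n \<pi> P y * P n (y n) i"
proof -
  have "{1..<Suc n} = insert n {1..<n}" using assms by auto
  moreover have "(\<Prod>t\<in>{1..<n}. P t ((y(Suc n := i)) t) ((y(Suc n := i)) (t+1)))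
     = (\<Prod>t\<in>{1..<n}. P t (y t) (y (t+1)))"
    by (rule prod.cong) auto
  ultimately show ?thesis using assms by (simp add: joint_def algebra_simps)
qed

lemma MM_tail:
  assumes mc: "is_markov_chain K T \<pi> P" and n: "1 \<le> n" "n < T"
    and dep: "\<And>x y. (\<forall>i\<in>{1..n}. x i = y i) \<Longrightarrow> \<phi> x = \<phi> y"
  shows "MM K (Suc n) \<pi> P \<phi> = MM K n \<pi> P \<phi>"
proof -
  have "MM K (Suc n) \<pi> P \<phi> = (\<Sum>y\<in>PiE {1..n} (\<lambda>_. {1..K}). \<Sum>i\<in>{1..K}.
      if \<phi> (y(Suc n := i)) then joint (Suc n) \<pi> P (y(Suc n := i)) else 0)"
    unfolding MM_def by (rule sum_PiE_Suc) simp
  also have "\<dots> = (\<Sum>y\<in>PiE {1..n} (\<lambda>_. {1..K}). if \<phi> y then joint n \<pi> P y else 0)"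
  proof (rule sum.cong[OF refl])
    fix y assume y: "y \<in> PiE {1..n} (\<lambda>_. {1..K})"
    have yn: "y n \<in> {1..K}" using y n by (auto simp: PiE_def Pi_def)
    have st: "(\<Sum>i\<in>{1..K}. P n (y n) i) = 1" using mc n yn by (auto simp: is_markov_chain_def)
    have ph: "\<phi> (y(Suc n := i)) = \<phi> y" for i by (rule dep) auto
    show "(\<Sum>i\<in>{1..K}. if \<phi> (y(Suc n := i)) then joint (Suc n) \<pi> P (y(Suc n := i)) else 0)
        = (if \<phi> y then joint n \<pi> P y else 0)"
      using st by (simp add: ph joint_Suc[OF n(1)] sum_distrib_left[symmetric])
  qed
  finally show ?thesis unfolding MM_def .
qed

lemma MM_tail_iter:
  assumes mc: "is_markov_chain K T \<pi> P" and n: "1 \<le> n" "n \<le> m" "m \<le> T"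
    and dep: "\<And>x y. (\<forall>i\<in>{1..n}. x i = y i) \<Longrightarrow> \<phi> x = \<phi> y"
  shows "MM K m \<pi> P \<phi> = MM K n \<pi> P \<phi>"
  using n(2,3)
proof (induction m rule: dec_induct)
  case base then show ?case by simp
next
  case (step m)
  have "MM K (Suc m) \<pi> P \<phi> = MM K m \<pi> P \<phi>"
    by (rule MM_tail[OF mc]) (use step n dep in auto)
  then show ?case using step by simp
qed

lemma MM_step:
  assumes n: "1 \<le> a" "a \<le> b" and sb: "s (Suc b) \<in> {1..K}"
  shows "MM K (Suc b) \<pi> P (\<lambda>x. \<forall>i\<in>{a..Suc b}. x i = s i)
       = MM K b \<pi> P (\<lambda>x. \<forall>i\<in>{a..b}. x i = s i) * P b (s b) (s (Suc b))"
proof -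
  have "MM K (Suc b) \<pi> P (\<lambda>x. \<forall>i\<in>{a..Suc b}. x i = s i) = (\<Sum>y\<in>PiE {1..b} (\<lambda>_. {1..K}). \<Sum>i\<in>{1..K}.
      if (\<forall>j\<in>{a..Suc b}. (y(Suc b := i)) j = s j) then joint (Suc b) \<pi> P (y(Suc b := i)) else 0)"
    unfolding MM_def by (rule sum_PiE_Suc) simp
  also have "\<dots> = (\<Sum>y\<in>PiE {1..b} (\<lambda>_. {1..K}).
      (if (\<forall>j\<in>{a..b}. y j = s j) then joint b \<pi> P y else 0) * P b (s b) (s (Suc b)))"
  proof (rule sum.cong[OF refl])
    fix y assume y: "y \<in> PiE {1..b} (\<lambda>_. {1..K})"
    have eq: "(\<forall>j\<in>{a..Suc b}. (y(Suc b := i)) j = s j) \<longleftrightarrow> (\<forall>j\<in>{a..b}. y j = s j) \<and> i = s (Suc b)" for i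
    proof -
      have "{a..Suc b} = insert (Suc b) {a..b}" using n by auto
      then show ?thesis by auto
    qed
    have "(\<Sum>i\<in>{1..K}. if (\<forall>j\<in>{a..Suc b}. (y(Suc b := i)) j = s j) then joint (Suc b) \<pi> P (y(Suc b := i)) else 0)
       = (\<Sum>i\<in>{1..K}. if i = s (Suc b) then (if (\<forall>j\<in>{a..b}. y j = s j) then joint b \<pi> P y * P b (y b) i else 0) else 0)"
    proof (rule sum.cong[OF refl])
      fix i assume "i \<in> {1..K}"
      show "(if (\<forall>j\<in>{a..Suc b}. (y(Suc b := i)) j = s j) then joint (Suc b) \<pi> P (y(Suc b := i)) else 0)
       = (if i = s (Suc b) then (if (\<forall>j\<in>{a..b}. y j = s j) then joint b \<pi> P y * P b (y b) i else 0) else 0)"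
        unfolding eq using joint_Suc[of b \<pi> P y i] n by auto
    qed
    also have "\<dots> = (if (\<forall>j\<in>{a..b}. y j = s j) then joint b \<pi> P y * P b (y b) (s (Suc b)) else 0)"
      using sb by (simp add: sum.delta)
    also have "\<dots> = (if (\<forall>j\<in>{a..b}. y j = s j) then joint b \<pi> P y else 0) * P b (s b) (s (Suc b))"
      using n by auto
    finally show "(\<Sum>i\<in>{1..K}. if (\<forall>j\<in>{a..Suc b}. (y(Suc b := i)) j = s j) then joint (Suc b) \<pi> P (y(Suc b := i)) else 0)
       = (if (\<forall>j\<in>{a..b}. y j = s j) then joint b \<pi> P y else 0) * P b (s b) (s (Suc b))" .
  qed
  also have "\<dots> = MM K b \<pi> P (\<lambda>x. \<forall>i\<in>{a..b}. x i = s i) * P b (s b) (s (Suc b))"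
    unfolding MM_def by (simp add: sum_distrib_right)
  finally show ?thesis .
qed

lemma marg_MM:
  assumes mc: "is_markov_chain K T \<pi> P" and n: "1 \<le> a" "a \<le> b" "b \<le> T"
  shows "marg K T \<pi> P a b s = MM K b \<pi> P (\<lambda>x. \<forall>i\<in>{a..b}. x i = s i)"
proof -
  have "marg K T \<pi> P a b s = MM K T \<pi> P (\<lambda>x. \<forall>i\<in>{a..b}. x i = s i)"
    unfolding marg_def MM_def paths_def by (rule sum.inter_filter) (simp add: finite_PiE)
  also have "\<dots> = MM K b \<pi> P (\<lambda>x. \<forall>i\<in>{a..b}. x i = s i)"
    by (rule MM_tail_iter[OF mc]) (use n in auto)
  finally show ?thesis .
qed

lemma marg_step:
  assumes mc: "is_markov_chain K T \<pi> P" and n: "1 \<le> a" "a \<le> b" "Suc b \<le> T"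
    and s: "s \<in> paths K T"
  shows "marg K T \<pi> P a (Suc b) s = marg K T \<pi> P a b s * P b (s b) (s (Suc b))"
proof -
  have sb: "s (Suc b) \<in> {1..K}" using s n by (auto simp: paths_def PiE_def Pi_def)
  show ?thesis
    using marg_MM[OF mc n(1) _ n(3)] marg_MM[OF mc n(1,2)] n MM_step[of a b s K \<pi> P, OF n(1,2) sb] by simp
qed

lemma marg_full:
  assumes mc: "is_markov_chain K T \<pi> P" and n: "1 \<le> m" "m \<le> T"
    and s: "s \<in> paths K T"
  shows "marg K T \<pi> P 1 m s = marg K T \<pi> P 1 1 s * (\<Prod>t\<in>{1..<m}. P t (s t) (s (Suc t)))"
  using n
proof (induction m rule: dec_induct)
  case base then show ?case by simp
next
  case (step m)
  have "{1..<Suc m} = insert m {1..<m}" using step by auto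
  then show ?case using step marg_step[OF mc _ _ _ s, of 1 m] by (simp add: algebra_simps)
qed

lemma joint_nonneg:
  assumes mc: "is_markov_chain K T \<pi> P" and x: "x \<in> paths K T" and T: "T \<ge> 1"
  shows "joint T \<pi> P x \<ge> 0"
proof -
  have x1: "\<And>i. i \<in> {1..T} \<Longrightarrow> x i \<in> {1..K}" using x by (auto simp: paths_def PiE_def Pi_def)
  show ?thesis
  proof -
    have "\<pi> (x 1) \<ge> 0" using mc x1[of 1] T by (auto simp: is_markov_chain_def)
    moreover have "(\<Prod>t\<in>{1..<T}. P t (x t) (x (t+1))) \<ge> 0"
      by (rule prod_nonneg) (use mc x1 in \<open>auto simp: is_markov_chain_def\<close>)
    ultimately show ?thesis by (simp add: joint_def)
  qed
qed

lemma marg_nonneg: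
  assumes mc: "is_markov_chain K T \<pi> P" and T: "T \<ge> 1"
  shows "marg K T \<pi> P a b s \<ge> 0"
  unfolding marg_def by (rule sum_nonneg) (use joint_nonneg[OF mc _ T] in auto)

lemma Ubar_nonneg:
  assumes mc: "is_markov_chain K T \<pi> P" and T: "T \<ge> 1"
  shows "Ubar K T \<pi> P k s \<ge> 0"
  unfolding Ubar_def by (rule prod_nonneg) (use marg_nonneg[OF mc T] in auto)

lemma Ubar_rec:
  assumes mc: "is_markov_chain K T \<pi> P" and k: "1 < k" "k \<le> T" and s: "s \<in> paths K T"
  shows "Ubar K T \<pi> P k s = marg K T \<pi> P 1 T s * Ubar K T \<pi> P (k - 1) s"
proof -
  define f where "f a b = marg K T \<pi> P a b s" for a b
  define e where "e t = P t (s t) (s (Suc t))" for t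
  define g where "g (k'::nat) j = f (nat (max (j+1) 1)) (nat (min (j + int k') (int T)))" for k' j
  define h where "h j = (if j + int k \<le> int T then e (nat (j + int k - 1)) else 1)" for j
  have U: "Ubar K T \<pi> P k' s = (\<Prod>j\<in>{1 - int k'..int T - 1}. g k' j)" for k'
    unfolding Ubar_def g_def f_def by simp
  have ik: "int (k - 1) = int k - 1" using k by simp
  have S: "{1 - int k..int T - 1} = insert (1 - int k) {2 - int k..int T - 1}" using k by auto
  have g1: "g k (1 - int k) = f 1 1" unfolding g_def using k by simp
  have g3: "g k j = g (k - 1) j * h j" if j: "j \<in> {2 - int k..int T - 1}" for j
  proof (cases "j + int k \<le> int T")
    case True
    define a where "a = nat (max (j+1) 1)"
    define b where "b = nat (j + int k - 1)"
    have ab: "1 \<le> a" "a \<le> b" "Suc b \<le> T" using True j k unfolding a_def b_def by auto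
    have nn: "nat (j + int k) = Suc (nat (j + int k - 1))" using j k by auto
    have "g k j = f a (Suc b)" unfolding g_def a_def b_def using True
      by (simp add: min_def nn)
    also have "\<dots> = f a b * e b" unfolding f_def e_def by (rule marg_step[OF mc ab s])
    also have "f a b = g (k - 1) j" unfolding g_def a_def b_def ik using True by (simp add: min_def algebra_simps)
    also have "e b = h j" unfolding h_def b_def using True by simp
    finally show ?thesis .
  next
    case False
    then have "min (j + (int k - 1)) (int T) = int T" "min (j + int k) (int T) = int T" by auto
    then show ?thesis using False unfolding g_def h_def ik by simp
  qed
  have h1: "(\<Prod>j\<in>{2 - int k..int T - 1}. h j) = (\<Prod>j\<in>{2 - int k..int T - int k}. h j)"
    by (rule prod.mono_neutral_right) (use k in \<open>auto simp: h_def\<close>)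
  also have "\<dots> = (\<Prod>j\<in>{2 - int k..int T - int k}. e (nat (j + int k - 1)))"
    by (rule prod.cong) (auto simp: h_def)
  also have "\<dots> = (\<Prod>t\<in>{1..<T}. e t)"
    by (rule prod.reindex_bij_witness[of _ "\<lambda>t. int t + 1 - int k" "\<lambda>j. nat (j + int k - 1)"]) (use k in auto)
  finally have h1: "(\<Prod>j\<in>{2 - int k..int T - 1}. h j) = (\<Prod>t\<in>{1..<T}. e t)" .
  have "Ubar K T \<pi> P k s = f 1 1 * (\<Prod>j\<in>{2 - int k..int T - 1}. g k j)"
    unfolding U S by (simp add: g1)
  also have "\<dots> = f 1 1 * ((\<Prod>j\<in>{2 - int k..int T - 1}. g (k-1) j) * (\<Prod>j\<in>{2 - int k..int T - 1}. h j))"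
    by (simp add: g3 prod.distrib)
  also have "(\<Prod>j\<in>{2 - int k..int T - 1}. g (k-1) j) = Ubar K T \<pi> P (k - 1) s"
    unfolding U ik by simp
  also have "f 1 1 * (Ubar K T \<pi> P (k - 1) s * (\<Prod>j\<in>{2 - int k..int T - 1}. h j))
      = (f 1 1 * (\<Prod>t\<in>{1..<T}. e t)) * Ubar K T \<pi> P (k - 1) s" by (simp add: h1)
  also have "f 1 1 * (\<Prod>t\<in>{1..<T}. e t) = marg K T \<pi> P 1 T s"
    unfolding f_def e_def using marg_full[OF mc _ _ s, of T] k by simp
  finally show ?thesis .
qed

lemma eln_mult:
  assumes "x \<ge> 0" "y \<ge> 0"
  shows "eln (x * y) = eln x + eln y"
  using assms by (auto simp: eln_def ln_mult)

theorem theorem3: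
  fixes K T k :: nat and \<pi> :: "nat \<Rightarrow> real" and P :: "nat \<Rightarrow> nat \<Rightarrow> nat \<Rightarrow> real"
    and s :: "nat \<Rightarrow> nat"
  assumes "K > 1" and "T \<ge> 1"
    and "is_markov_chain K T \<pi> P"
    and "1 < k" and "k \<le> T"
    and "s \<in> paths K T"
  shows "Rbar K T \<pi> P k s = Rbar_inf K T \<pi> P s + Rbar K T \<pi> P (k - 1) s"
proof -
  define p where "p = marg K T \<pi> P 1 T s"
  define U where "U = Ubar K T \<pi> P (k - 1) s"
  have p0: "p \<ge> 0" unfolding p_def by (rule marg_nonneg[OF assms(3,2)])
  have U0: "U \<ge> 0" unfolding U_def by (rule Ubar_nonneg[OF assms(3,2)])
  have Tp: "1 / real T > 0" using assms(2) by simp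
  have "Ubar K T \<pi> P k s = p * U" unfolding p_def U_def by (rule Ubar_rec[OF assms(3-6)])
  then have "Rbar K T \<pi> P k s = - (ereal (1 / real T) * (eln p + eln U))"
    unfolding Rbar_def using eln_mult[OF p0 U0] by simp
  also have "\<dots> = - (ereal (1 / real T) * eln p) + - (ereal (1 / real T) * eln U)"
    using Tp by (cases "p = 0"; cases "U = 0") (auto simp: eln_def add_divide_distrib)
  finally show ?thesis unfolding Rbar_def Rbar_inf_def p_def U_def .
qed

end
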